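(* Let $G$ be a finite simple connected graph with at least one edge, let $W$ be a minimal vertex cover of $G$, and let $s\ge 0$. Let $f=\prod_{y\in V(G)\setminus W} y^{(0)}\in\mathcal{J}_s(R)$. Then $$\langle \mathcal{J}_s(W)\rangle = \mathcal{J}_s(I(G)) : f^{\infty}.$$
   Context: $R=k[x_1,\dots,x_n]$ over a field $k$, with the vertices of $G$ identified with the variables. The edge ideal is $I(G)=\langle x_ix_j : \{x_i,x_j\}\in E(G)\rangle$. A vertex cover is a set of vertices meeting every edge; minimal if no proper subset is a vertex cover. $\mathcal{J}_s(R)=k[x_i^{(l)} : 1\le i\le n,\ 0\le l\le s]$. For $I=\langle f_1,\dots,f_r\rangle\subseteq R$, write $f_m(x_1^{(0)}+x_1^{(1)}t+\cdots+x_1^{(s)}t^s,\dots)\equiv\sum_{l=0}^s\alpha_m^{(l)}t^l \pmod{t^{s+1}}$; then $\mathcal{J}_s(I)=\langle\alpha_m^{(l)}\rangle\subseteq\mathcal{J}_s(R)$. For $W\subseteq V(G)$, $\mathcal{J}_s(W)=\{x^{(j)} : x\in W,\ 0\le j\le s\}$. The saturation is $I:f^\infty=\{g : gf^N\in I \text{ for some } N\ge 0\}$. *)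

theory Defs
  imports "HOL-Library.Poly_Mapping" "HOL-Computational_Algebra.Polynomial"
begin

type_synonym ('v, 'k) mpoly = "('v \<Rightarrow>\<^sub>0 nat) \<Rightarrow>\<^sub>0 'k"

definition Var :: "'v \<Rightarrow> ('v, 'k::comm_ring_1) mpoly" where
  "Var v = Poly_Mapping.single (Poly_Mapping.single v 1) 1"

definition Const :: "'k::comm_ring_1 \<Rightarrow> ('v, 'k) mpoly" where
  "Const c = Poly_Mapping.single 0 c"

text \<open>Polynomial ring k[x_v : v in V] as the set of polynomials using only variables in V.\<close>
definition poly_ring_on :: "'v set \<Rightarrow> ('v, 'k::comm_ring_1) mpoly set" where
  "poly_ring_on V = {p. \<forall>m\<in>Poly_Mapping.keys p. Poly_Mapping.keys m \<subseteq> V}"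

definition eval_mpoly :: "('v \<Rightarrow> 'b::comm_ring_1) \<Rightarrow> ('k::comm_ring_1 \<Rightarrow> 'b) \<Rightarrow> ('v, 'k) mpoly \<Rightarrow> 'b" where
  "eval_mpoly phi iota p = (\<Sum>m\<in>Poly_Mapping.keys p. iota (Poly_Mapping.lookup p m) * (\<Prod>v\<in>Poly_Mapping.keys m. phi v ^ Poly_Mapping.lookup m v))"

definition ideal_in :: "'a::comm_ring_1 set \<Rightarrow> 'a set \<Rightarrow> 'a set" where
  "ideal_in P B = {x. \<exists>F c. finite F \<and> F \<subseteq> B \<and> (\<forall>b\<in>F. c b \<in> P) \<and> x = (\<Sum>b\<in>F. c b * b)}"

definition saturation :: "'a::comm_ring_1 set \<Rightarrow> 'a set \<Rightarrow> 'a \<Rightarrow> 'a set" where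
  "saturation P I f = {g \<in> P. \<exists>N::nat. g * f ^ N \<in> I}"

text \<open>Jet variables x^(l) are represented as Var (x, l). The jet ring J_s(R) for R = k[x_v : v in V].\<close>
definition jet_ring :: "'v set \<Rightarrow> nat \<Rightarrow> ('v \<times> nat, 'k::comm_ring_1) mpoly set" where
  "jet_ring V s = poly_ring_on (V \<times> {0..s})"

definition jet_coeff :: "nat \<Rightarrow> ('v, 'k::comm_ring_1) mpoly \<Rightarrow> nat \<Rightarrow> ('v \<times> nat, 'k) mpoly" where
  "jet_coeff s f l =
     coeff (eval_mpoly (\<lambda>v. \<Sum>j\<le>s. monom (Var (v, j)) j) (\<lambda>c. [:Const c:]) f) l"

text \<open>J_s(I) for I generated by the set Fs, as an ideal of J_s(R).\<close>
definition jet_ideal :: "'v set \<Rightarrow> nat \<Rightarrow> ('v, 'k::comm_ring_1) mpoly set \<Rightarrow> ('v \<times> nat, 'k) mpoly set" where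
  "jet_ideal V s Fs = ideal_in (jet_ring V s) {jet_coeff s f l | f l. f \<in> Fs \<and> l \<le> s}"

definition jet_vars :: "'v set \<Rightarrow> nat \<Rightarrow> ('v \<times> nat, 'k::comm_ring_1) mpoly set" where
  "jet_vars W s = {Var (x, j) | x j. x \<in> W \<and> j \<le> s}"

definition simple_graph :: "'v set \<Rightarrow> 'v set set \<Rightarrow> bool" where
  "simple_graph V E \<longleftrightarrow> finite V \<and> (\<forall>e\<in>E. \<exists>u v. u \<noteq> v \<and> u \<in> V \<and> v \<in> V \<and> e = {u, v})"

definition connected_graph :: "'v set \<Rightarrow> 'v set set \<Rightarrow> bool" where
  "connected_graph V E \<longleftrightarrow> V \<noteq> {} \<and> (\<forall>u\<in>V. \<forall>v\<in>V. (\<lambda>a b. {a, b} \<in> E)\<^sup>*\<^sup>* u v)"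

definition vertex_cover :: "'v set \<Rightarrow> 'v set set \<Rightarrow> 'v set \<Rightarrow> bool" where
  "vertex_cover V E W \<longleftrightarrow> W \<subseteq> V \<and> (\<forall>e\<in>E. e \<inter> W \<noteq> {})"

definition minimal_vertex_cover :: "'v set \<Rightarrow> 'v set set \<Rightarrow> 'v set \<Rightarrow> bool" where
  "minimal_vertex_cover V E W \<longleftrightarrow> vertex_cover V E W \<and> (\<forall>W'. W' \<subset> W \<longrightarrow> \<not> vertex_cover V E W')"

definition edge_gens :: "'v set set \<Rightarrow> ('v, 'k::comm_ring_1) mpoly set" where
  "edge_gens E = {Var i * Var j | i j. {i, j} \<in> E \<and> i \<noteq> j}"

end

theory Submission
  imports Defs
begin

definition subring_like :: "'a::comm_ring_1 set \<Rightarrow> bool" where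
  "subring_like P \<longleftrightarrow> 0 \<in> P \<and> 1 \<in> P \<and> (\<forall>x\<in>P. \<forall>y\<in>P. x + y \<in> P \<and> x * y \<in> P \<and> - x \<in> P)"

lemma SR_0: "subring_like P \<Longrightarrow> 0 \<in> P" unfolding subring_like_def by blast
lemma SR_1: "subring_like P \<Longrightarrow> 1 \<in> P" unfolding subring_like_def by blast
lemma SR_add: "subring_like P \<Longrightarrow> x \<in> P \<Longrightarrow> y \<in> P \<Longrightarrow> x + y \<in> P" unfolding subring_like_def by blast
lemma SR_mult: "subring_like P \<Longrightarrow> x \<in> P \<Longrightarrow> y \<in> P \<Longrightarrow> x * y \<in> P" unfolding subring_like_def by blast
lemma SR_uminus: "subring_like P \<Longrightarrow> x \<in> P \<Longrightarrow> - x \<in> P" unfolding subring_like_def by blast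
lemma SR_power: "subring_like P \<Longrightarrow> x \<in> P \<Longrightarrow> x ^ n \<in> P"
proof (induction n)
  case 0 then show ?case using SR_1 by simp
next
  case (Suc n) then show ?case using SR_mult by simp
qed
lemma SR_prod: "subring_like P \<Longrightarrow> (\<And>i. i \<in> I \<Longrightarrow> f i \<in> P) \<Longrightarrow> (\<Prod>i\<in>I. f i) \<in> P"
proof (induction I rule: infinite_finite_induct)
  case (infinite A) then show ?case using SR_1 by simp
next
  case empty then show ?case using SR_1 by simp
next
  case (insert x F) then show ?case by (simp, intro SR_mult) auto
qed

lemma ideal_in_gen:
  assumes "b \<in> B" "c \<in> P" shows "c * b \<in> ideal_in P B"
  unfolding ideal_in_def
  by (rule CollectI, rule exI[of _ "{b}"], rule exI[of _ "\<lambda>_. c"]) (use assms in auto)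

lemma ideal_in_0: "0 \<in> ideal_in P B"
  unfolding ideal_in_def by (rule CollectI, rule exI[of _ "{}"]) auto

lemma ideal_in_add:
  assumes SR: "subring_like P" and x: "x \<in> ideal_in P B" and y: "y \<in> ideal_in P B"
  shows "x + y \<in> ideal_in P B"
proof -
  obtain F c where F: "finite F" "F \<subseteq> B" "\<forall>b\<in>F. c b \<in> P" "x = (\<Sum>b\<in>F. c b * b)"
    using x unfolding ideal_in_def by blast
  obtain G d where G: "finite G" "G \<subseteq> B" "\<forall>b\<in>G. d b \<in> P" "y = (\<Sum>b\<in>G. d b * b)"
    using y unfolding ideal_in_def by blast
  define e where "e b = (if b \<in> F then c b else 0) + (if b \<in> G then d b else 0)" for b
  have Padd: "\<And>u v. u \<in> P \<Longrightarrow> v \<in> P \<Longrightarrow> u + v \<in> P" and P0: "0 \<in> P"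
    using SR unfolding subring_like_def by blast+
  have eP: "\<forall>b\<in>F \<union> G. e b \<in> P"
  proof
    fix b assume "b \<in> F \<union> G"
    have "(if b \<in> F then c b else 0) \<in> P" using F P0 by auto
    moreover have "(if b \<in> G then d b else 0) \<in> P" using G P0 by auto
    ultimately show "e b \<in> P" unfolding e_def by (rule Padd)
  qed
  have xeq: "x = (\<Sum>b\<in>F \<union> G. (if b \<in> F then c b else 0) * b)"
    unfolding F(4) by (rule sum.mono_neutral_cong_left) (use F(1) G(1) in auto)
  have yeq: "y = (\<Sum>b\<in>F \<union> G. (if b \<in> G then d b else 0) * b)"
    unfolding G(4) by (rule sum.mono_neutral_cong_left) (use F(1) G(1) in auto)
  have "x + y = (\<Sum>b\<in>F \<union> G. (if b \<in> F then c b else 0) * b + (if b \<in> G then d b else 0) * b)"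
    by (simp only: xeq yeq sum.distrib)
  also have "\<dots> = (\<Sum>b\<in>F \<union> G. e b * b)"
    by (simp only: e_def distrib_right)
  finally have "x + y = (\<Sum>b\<in>F \<union> G. e b * b)" .
  then show ?thesis unfolding ideal_in_def
    by (intro CollectI exI[of _ "F \<union> G"] exI[of _ e] conjI) (use F(1,2) G(1,2) eP in simp_all)
qed

lemma ideal_in_mult:
  assumes SR: "subring_like P" and x: "x \<in> ideal_in P B" and c: "c \<in> P"
  shows "c * x \<in> ideal_in P B"
proof -
  obtain F d where F: "finite F" "F \<subseteq> B" "\<forall>b\<in>F. d b \<in> P" "x = (\<Sum>b\<in>F. d b * b)"
    using x unfolding ideal_in_def by blast
  have "c * x = (\<Sum>b\<in>F. (c * d b) * b)" unfolding F(4) by (simp only: sum_distrib_left mult.assoc)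
  moreover have "\<forall>b\<in>F. c * d b \<in> P" using SR_mult[OF SR c] F by blast
  ultimately show ?thesis unfolding ideal_in_def
    by (intro CollectI exI[of _ F] exI[of _ "\<lambda>b. c * d b"] conjI) (use F(1,2) in simp_all)
qed

lemma ideal_in_uminus:
  assumes SR: "subring_like P" and x: "x \<in> ideal_in P B"
  shows "- x \<in> ideal_in P B"
proof -
  have "-1 \<in> P" using SR_uminus[OF SR SR_1[OF SR]] .
  from ideal_in_mult[OF SR x this] show ?thesis by simp
qed

lemma ideal_in_diff:
  assumes SR: "subring_like P" and x: "x \<in> ideal_in P B" and y: "y \<in> ideal_in P B"
  shows "x - y \<in> ideal_in P B"
  using ideal_in_add[OF SR x ideal_in_uminus[OF SR y]] by simp

lemma ideal_in_sum:
  assumes SR: "subring_like P" and "\<forall>i\<in>I. f i \<in> ideal_in P B"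
  shows "(\<Sum>i\<in>I. f i) \<in> ideal_in P B"
  using assms(2)
proof (induction I rule: infinite_finite_induct)
  case (infinite A) then show ?case by (simp add: ideal_in_0)
next
  case empty then show ?case by (simp add: ideal_in_0)
next
  case (insert x F) then show ?case by (simp add: ideal_in_add[OF SR])
qed

lemma ideal_in_minimal:
  assumes "0 \<in> S" "\<And>x y. x \<in> S \<Longrightarrow> y \<in> S \<Longrightarrow> x + y \<in> S"
    "\<And>b c. b \<in> B \<Longrightarrow> c \<in> P \<Longrightarrow> c * b \<in> S"
  shows "ideal_in P B \<subseteq> S"
proof
  fix x assume "x \<in> ideal_in P B"
  then obtain F d where F: "finite F" "F \<subseteq> B" "\<forall>b\<in>F. d b \<in> P" "x = (\<Sum>b\<in>F. d b * b)"
    unfolding ideal_in_def by blast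
  have "(\<Sum>b\<in>F. d b * b) \<in> S" using F(1,2,3)
  proof (induction F rule: finite_induct)
    case empty then show ?case using assms by simp
  next
    case (insert a F) then show ?case using assms by simp
  qed
  then show "x \<in> S" using F by simp
qed

lemma ideal_in_subset:
  assumes SR: "subring_like P" and "B \<subseteq> P" shows "ideal_in P B \<subseteq> P"
  by (rule ideal_in_minimal) (use SR assms(2) in \<open>auto intro: SR_0 SR_add SR_mult\<close>)


lemma keys_add_nat: "Poly_Mapping.keys (a + b) = Poly_Mapping.keys a \<union> Poly_Mapping.keys (b :: 'x \<Rightarrow>\<^sub>0 nat)"
  by (auto simp: in_keys_iff lookup_add)

lemma poly_ring_on_SR: "subring_like (poly_ring_on V :: ('v, 'k::comm_ring_1) mpoly set)"
proof -
  let ?P = "poly_ring_on V :: ('v, 'k) mpoly set"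
  have add: "x + y \<in> ?P" if x: "x \<in> ?P" and y: "y \<in> ?P" for x y
    using x y keys_add[of x y] unfolding poly_ring_on_def by blast
  have neg: "- x \<in> ?P" if x: "x \<in> ?P" for x
    using x unfolding poly_ring_on_def by simp
  have mult: "x * y \<in> ?P" if x: "x \<in> ?P" and y: "y \<in> ?P" for x y
    unfolding poly_ring_on_def
  proof (intro CollectI ballI)
    fix m assume "m \<in> Poly_Mapping.keys (x * y)"
    then obtain a b where "m = a + b" "a \<in> Poly_Mapping.keys x" "b \<in> Poly_Mapping.keys y"
      using keys_mult[of x y] by blast
    then show "Poly_Mapping.keys m \<subseteq> V" using x y unfolding poly_ring_on_def by (simp add: keys_add_nat)
  qed
  have "0 \<in> ?P" "1 \<in> ?P" unfolding poly_ring_on_def by auto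
  then show ?thesis unfolding subring_like_def using add neg mult by blast
qed

lemma single_in_poly_ring_on:
  "Poly_Mapping.keys m \<subseteq> V \<Longrightarrow> Poly_Mapping.single m c \<in> poly_ring_on V"
  unfolding poly_ring_on_def by auto

lemma Var_in_poly_ring_on: "v \<in> V \<Longrightarrow> (Var v :: ('v, 'k::comm_ring_1) mpoly) \<in> poly_ring_on V"
  unfolding Var_def by (rule single_in_poly_ring_on) auto

definition mi :: "'v set \<Rightarrow> ('v, 'k::comm_ring_1) mpoly set" where
  "mi A = {p. \<forall>m\<in>Poly_Mapping.keys p. Poly_Mapping.keys m \<inter> A \<noteq> {}}"

lemma mi_0: "0 \<in> mi A" unfolding mi_def by simp

lemma mi_add: "x \<in> mi A \<Longrightarrow> y \<in> mi A \<Longrightarrow> x + y \<in> mi A"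
  unfolding mi_def using keys_add[of x y] by blast

lemma mi_mult: assumes "p \<in> mi A" shows "c * p \<in> mi A"
  unfolding mi_def
proof (intro CollectI ballI)
  fix m assume "m \<in> Poly_Mapping.keys (c * p)"
  then obtain a b where "m = a + b" "a \<in> Poly_Mapping.keys c" "b \<in> Poly_Mapping.keys p"
    using keys_mult[of c p] by blast
  then show "Poly_Mapping.keys m \<inter> A \<noteq> {}" using assms unfolding mi_def by (auto simp: keys_add_nat)
qed

lemma mi_sum: "(\<And>i. i \<in> I \<Longrightarrow> f i \<in> mi A) \<Longrightarrow> (\<Sum>i\<in>I. f i) \<in> mi A"
proof (induction I rule: infinite_finite_induct)
  case (infinite A) then show ?case by (simp add: mi_0)
next
  case empty then show ?case by (simp add: mi_0)
next
  case (insert x F) then show ?case by (simp add: mi_add)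
qed

lemma single_in_mi: "Poly_Mapping.keys m \<inter> A \<noteq> {} \<Longrightarrow> Poly_Mapping.single m c \<in> mi A"
  unfolding mi_def by auto

lemma Var_mult_Var: "Var a * Var b = Poly_Mapping.single (Poly_Mapping.single a 1 + Poly_Mapping.single b 1) (1::'k::comm_ring_1)"
  unfolding Var_def by (simp add: mult_single)

lemma lookup_mult_single1:
  "Poly_Mapping.lookup (g * Poly_Mapping.single m0 1) (k + m0) = Poly_Mapping.lookup (g :: ('x \<Rightarrow>\<^sub>0 nat) \<Rightarrow>\<^sub>0 'k::comm_ring_1) k"
proof -
  have inner: "(\<Sum>q. (Poly_Mapping.lookup (Poly_Mapping.single m0 (1::'k)) q when k + m0 = l + q)) = (1 when k = l)" for l
  proof -
    have "(1 when m0 = q \<and> k + m0 = l + q) = ((1 when k = l) when m0 = q)" for q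
      by (auto simp: when_def)
    note e = this
    show ?thesis unfolding lookup_single when_when e by (cases "k = l") simp_all
  qed
  show ?thesis unfolding lookup_mult inner by (simp add: mult_when)
qed

lemma poly_sum_monomials:
  "g = (\<Sum>m\<in>Poly_Mapping.keys g. Poly_Mapping.single m (Poly_Mapping.lookup g m))"
proof (rule poly_mapping_eqI)
  fix k
  show "Poly_Mapping.lookup g k = Poly_Mapping.lookup (\<Sum>m\<in>Poly_Mapping.keys g. Poly_Mapping.single m (Poly_Mapping.lookup g m)) k"
    by (simp add: lookup_sum lookup_single when_def in_keys_iff)
qed


lemma coeff_jetpoly:
  "coeff (\<Sum>j\<le>s. monom (Var (v, j) :: ('v \<times> nat, 'k::comm_ring_1) mpoly) j) a = (if a \<le> s then Var (v, a) else 0)"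
  by (simp add: coeff_sum)

lemma jet_coeff_edge:
  assumes "i \<noteq> j" "l \<le> s"
  shows "jet_coeff s (Var i * Var j :: ('v, 'k::field) mpoly) l = (\<Sum>a\<le>l. Var (i, a) * Var (j, l - a))"
proof -
  define m where "m = Poly_Mapping.single i 1 + Poly_Mapping.single j (1::nat)"
  have km: "Poly_Mapping.keys m = {i, j}" unfolding m_def by (auto simp: keys_add_nat)
  have li: "Poly_Mapping.lookup m i = 1" "Poly_Mapping.lookup m j = 1"
    using assms(1) by (simp_all add: m_def lookup_add lookup_single when_def)
  define phi where "phi v = (\<Sum>j\<le>s. monom (Var (v, j) :: ('v \<times> nat, 'k) mpoly) j)" for v
  have ev: "eval_mpoly phi (\<lambda>c. [:Const c:]) (Var i * Var j :: ('v, 'k) mpoly) = phi i * phi j"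
    unfolding Var_mult_Var m_def[symmetric] eval_mpoly_def using km li assms(1)
    by (simp add: Const_def)
  have "jet_coeff s (Var i * Var j :: ('v, 'k) mpoly) l = coeff (phi i * phi j) l"
    unfolding jet_coeff_def phi_def[symmetric] ev ..
  also have "\<dots> = (\<Sum>a\<le>l. coeff (phi i) a * coeff (phi j) (l - a))" by (rule coeff_mult)
  also have "\<dots> = (\<Sum>a\<le>l. Var (i, a) * Var (j, l - a))"
    by (rule sum.cong) (use assms(2) in \<open>auto simp: phi_def coeff_jetpoly\<close>)
  finally show ?thesis .
qed


lemma jet_key:
  fixes X Y :: "nat \<Rightarrow> 'a::comm_ring_1"
  assumes SR: "subring_like P" and XP: "\<And>a. a \<le> s \<Longrightarrow> X a \<in> P" and YP: "\<And>a. a \<le> s \<Longrightarrow> Y a \<in> P"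
    and alpha: "\<And>l. l \<le> s \<Longrightarrow> (\<Sum>a\<le>l. X a * Y (l - a)) \<in> ideal_in P B"
  shows "j \<le> s \<Longrightarrow> X j * Y 0 ^ Suc j \<in> ideal_in P B"
proof (induction j rule: less_induct)
  case (less j)
  have "{..j} = insert j {..<j}" by auto
  then have split: "(\<Sum>a\<le>j. X a * Y (j - a)) = X j * Y 0 + (\<Sum>a<j. X a * Y (j - a))" by simp
  have termeq: "Y 0 ^ j * (X a * Y (j - a)) = (Y (j - a) * Y 0 ^ (j - a - 1)) * (X a * Y 0 ^ Suc a)"
    if "a < j" for a
  proof -
    have "Y 0 ^ j = Y 0 ^ (j - a - 1) * Y 0 ^ Suc a"
      by (subst power_add[symmetric]) (use that in simp)
    then show ?thesis by (simp add: mult_ac)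
  qed
  have "Y 0 ^ j * (\<Sum>a<j. X a * Y (j - a)) = (\<Sum>a<j. (Y (j - a) * Y 0 ^ (j - a - 1)) * (X a * Y 0 ^ Suc a))"
    unfolding sum_distrib_left by (rule sum.cong) (simp_all add: termeq)
  then have iden: "X j * Y 0 ^ Suc j = Y 0 ^ j * (\<Sum>a\<le>j. X a * Y (j - a))
      - (\<Sum>a<j. (Y (j - a) * Y 0 ^ (j - a - 1)) * (X a * Y 0 ^ Suc a))"
    unfolding split by (simp add: algebra_simps)
  have Y0: "Y 0 \<in> P" using YP by simp
  have m1: "Y 0 ^ j * (\<Sum>a\<le>j. X a * Y (j - a)) \<in> ideal_in P B"
    by (rule ideal_in_mult[OF SR alpha[OF less.prems] SR_power[OF SR Y0]])
  have m2: "(\<Sum>a<j. (Y (j - a) * Y 0 ^ (j - a - 1)) * (X a * Y 0 ^ Suc a)) \<in> ideal_in P B"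
  proof (rule ideal_in_sum[OF SR], rule ballI)
    fix a assume a: "a \<in> {..<j}"
    then have "X a * Y 0 ^ Suc a \<in> ideal_in P B" using less by simp
    moreover have "Y (j - a) * Y 0 ^ (j - a - 1) \<in> P"
      using less.prems by (intro SR_mult[OF SR] SR_power[OF SR Y0] YP) simp
    ultimately show "(Y (j - a) * Y 0 ^ (j - a - 1)) * (X a * Y 0 ^ Suc a) \<in> ideal_in P B"
      by (rule ideal_in_mult[OF SR])
  qed
  show ?case unfolding iden by (rule ideal_in_diff[OF SR m1 m2])
qed

lemma keys_sum_nat:
  "Poly_Mapping.keys (\<Sum>y\<in>S. g y :: 'x \<Rightarrow>\<^sub>0 nat) \<subseteq> (\<Union>y\<in>S. Poly_Mapping.keys (g y))"
proof (induction S rule: infinite_finite_induct)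
  case (insert x F) then show ?case by (auto simp: keys_add_nat)
qed auto

lemma prod_Var_single:
  "finite S \<Longrightarrow> (\<Prod>y\<in>S. Var (y, 0) :: ('v \<times> nat, 'k::comm_ring_1) mpoly)
     = Poly_Mapping.single (\<Sum>y\<in>S. Poly_Mapping.single (y, 0) 1) 1"
proof (induction S rule: finite_induct)
  case empty then show ?case by simp
next
  case (insert x F) then show ?case by (simp add: Var_def mult_single)
qed

lemma single_power:
  "\<exists>m'. (Poly_Mapping.single m 1 :: ('x \<Rightarrow>\<^sub>0 nat) \<Rightarrow>\<^sub>0 'k::comm_ring_1) ^ N = Poly_Mapping.single m' 1
     \<and> Poly_Mapping.keys m' \<subseteq> Poly_Mapping.keys m"
proof (induction N)
  case 0 then show ?case by (intro exI[of _ 0]) simp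
next
  case (Suc N)
  then obtain m' where m': "(Poly_Mapping.single m 1 :: ('x \<Rightarrow>\<^sub>0 nat) \<Rightarrow>\<^sub>0 'k) ^ N = Poly_Mapping.single m' 1"
    "Poly_Mapping.keys m' \<subseteq> Poly_Mapping.keys m" by blast
  show ?case
    by (intro exI[of _ "m + m'"]) (use m' in \<open>simp add: mult_single keys_add_nat\<close>)
qed

lemma decomp_in_ideal:
  assumes g: "g \<in> jet_ring V s" and gm: "g \<in> mi (W \<times> UNIV)" and WV: "W \<subseteq> V"
  shows "(g :: ('v \<times> nat, 'k::comm_ring_1) mpoly) \<in> ideal_in (jet_ring V s) (jet_vars W s)"
proof -
  have SR: "subring_like (jet_ring V s :: ('v \<times> nat, 'k) mpoly set)"
    unfolding jet_ring_def by (rule poly_ring_on_SR)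
  have "(\<Sum>m\<in>Poly_Mapping.keys g. Poly_Mapping.single m (Poly_Mapping.lookup g m)) \<in> ideal_in (jet_ring V s) (jet_vars W s)"
  proof (rule ideal_in_sum[OF SR], rule ballI)
    fix m assume m: "m \<in> Poly_Mapping.keys g"
    then have kmV: "Poly_Mapping.keys m \<subseteq> V \<times> {0..s}" using g unfolding jet_ring_def poly_ring_on_def by blast
    obtain w where w: "w \<in> Poly_Mapping.keys m" "w \<in> W \<times> UNIV" using gm m unfolding mi_def by blast
    obtain x j where xj: "w = (x, j)" "x \<in> W" "j \<le> s" using w kmV by force
    define m' where "m' = m - Poly_Mapping.single w 1"
    have lw: "Poly_Mapping.lookup m w \<ge> 1" using w(1) by (simp add: in_keys_iff)
    have mm: "m = m' + Poly_Mapping.single w 1"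
    proof (rule poly_mapping_eqI)
      fix k show "Poly_Mapping.lookup m k = Poly_Mapping.lookup (m' + Poly_Mapping.single w 1) k"
        using lw by (cases "k = w") (simp_all add: m'_def lookup_add lookup_minus lookup_single when_def)
    qed
    have km': "Poly_Mapping.keys m' \<subseteq> Poly_Mapping.keys m"
      by (auto simp: m'_def in_keys_iff lookup_minus)
    have "Poly_Mapping.single m (Poly_Mapping.lookup g m)
        = Poly_Mapping.single m' (Poly_Mapping.lookup g m) * Var w"
      unfolding Var_def by (subst mm) (simp add: mult_single)
    moreover have "Poly_Mapping.single m' (Poly_Mapping.lookup g m) \<in> jet_ring V s"
      unfolding jet_ring_def by (rule single_in_poly_ring_on) (use km' kmV in blast)
    moreover have "Var w \<in> jet_vars W s" unfolding jet_vars_def using xj by blast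
    ultimately show "Poly_Mapping.single m (Poly_Mapping.lookup g m) \<in> ideal_in (jet_ring V s) (jet_vars W s)"
      using ideal_in_gen by metis
  qed
  then show ?thesis using poly_sum_monomials[of g] by simp
qed


lemma neighbor_out:
  assumes sg: "simple_graph V E" and mvc: "minimal_vertex_cover V E W" and x: "x \<in> W"
  obtains y where "y \<in> V" "y \<notin> W" "{x, y} \<in> E" "x \<noteq> y"
proof -
  have vc: "vertex_cover V E W" and mn: "\<And>W'. W' \<subset> W \<Longrightarrow> \<not> vertex_cover V E W'"
    using mvc unfolding minimal_vertex_cover_def by blast+
  have WV: "W \<subseteq> V" using vc unfolding vertex_cover_def by blast
  have "\<not> vertex_cover V E (W - {x})" using mn x by blast
  then obtain e where e: "e \<in> E" "e \<inter> (W - {x}) = {}" using WV unfolding vertex_cover_def by blast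
  have "e \<inter> W \<noteq> {}" using vc e(1) unfolding vertex_cover_def by blast
  then have xe: "x \<in> e" using e(2) by blast
  obtain u v where uv: "u \<noteq> v" "u \<in> V" "v \<in> V" "e = {u, v}" using sg e(1) unfolding simple_graph_def by blast
  show ?thesis
  proof (cases "x = u")
    case True
    then show ?thesis using that[of v] uv e xe by (auto simp: insert_commute)
  next
    case False
    then have "x = v" using xe uv by blast
    then show ?thesis using that[of u] uv e xe False by (auto simp: insert_commute)
  qed
qed

theorem mainTheorem2:
  fixes V :: "'v set" and E :: "'v set set" and W :: "'v set" and s :: nat
  assumes "simple_graph V E"
    and "connected_graph V E"
    and "E \<noteq> {}"
    and "minimal_vertex_cover V E W"
  shows "ideal_in (jet_ring V s) (jet_vars W s :: ('v \<times> nat, 'k::field) mpoly set)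
       = saturation (jet_ring V s) (jet_ideal V s (edge_gens E :: ('v, 'k) mpoly set))
           (\<Prod>y\<in>V - W. Var (y, 0))"
proof -
  let ?P = "jet_ring V s :: ('v \<times> nat, 'k) mpoly set"
  let ?B = "{jet_coeff s f l | f l. f \<in> (edge_gens E :: ('v, 'k) mpoly set) \<and> l \<le> s}"
  let ?J = "jet_ideal V s (edge_gens E :: ('v, 'k) mpoly set)"
  let ?f = "(\<Prod>y\<in>V - W. Var (y, 0)) :: ('v \<times> nat, 'k) mpoly"
  have Jdef: "?J = ideal_in ?P ?B" unfolding jet_ideal_def ..
  have SR: "subring_like ?P" unfolding jet_ring_def by (rule poly_ring_on_SR)
  have finV: "finite V" using assms(1) unfolding simple_graph_def by blast
  have vc: "vertex_cover V E W" using assms(4) unfolding minimal_vertex_cover_def by blast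
  have WV: "W \<subseteq> V" using vc unfolding vertex_cover_def by blast
  have VarP: "Var (v, j) \<in> ?P" if "v \<in> V" "j \<le> s" for v j
    unfolding jet_ring_def by (rule Var_in_poly_ring_on) (use that in auto)
  have fP: "?f \<in> ?P" by (rule SR_prod[OF SR]) (use VarP in auto)
  show ?thesis
  proof
    show "ideal_in ?P (jet_vars W s) \<subseteq> saturation ?P ?J ?f"
    proof
      fix g assume g: "g \<in> ideal_in ?P (jet_vars W s)"
      have gP: "g \<in> ?P"
      proof -
        have "jet_vars W s \<subseteq> ?P" unfolding jet_vars_def using VarP WV by auto
        from ideal_in_subset[OF SR this] g show ?thesis by blast
      qed
      have "ideal_in ?P (jet_vars W s) \<subseteq> {h. h * ?f ^ Suc s \<in> ?J}"
      proof (rule ideal_in_minimal)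
        show "0 \<in> {h. h * ?f ^ Suc s \<in> ?J}" by (simp add: ideal_in_0 Jdef)
      next
        fix a b assume "a \<in> {h. h * ?f ^ Suc s \<in> ?J}" "b \<in> {h. h * ?f ^ Suc s \<in> ?J}"
        then show "a + b \<in> {h. h * ?f ^ Suc s \<in> ?J}"
          unfolding Jdef by (simp add: distrib_right ideal_in_add[OF SR])
      next
        fix b c :: "('v \<times> nat, 'k) mpoly" assume b: "b \<in> jet_vars W s" and c: "c \<in> ?P"
        then obtain x j where xj: "b = Var (x, j)" "x \<in> W" "j \<le> s" unfolding jet_vars_def by blast
        obtain y where y: "y \<in> V" "y \<notin> W" "{x, y} \<in> E" "x \<noteq> y"
          using neighbor_out[OF assms(1) assms(4) xj(2)] by blast
        have xV: "x \<in> V" using xj WV by blast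
        have eg: "(Var x * Var y :: ('v, 'k) mpoly) \<in> edge_gens E"
          unfolding edge_gens_def using y by blast
        have alpha: "(\<Sum>a\<le>l. Var (x, a) * Var (y, l - a)) \<in> ?J" if l: "l \<le> s" for l
        proof -
          have "jet_coeff s (Var x * Var y :: ('v, 'k) mpoly) l \<in> ?B" using eg l by blast
          then have "1 * jet_coeff s (Var x * Var y :: ('v, 'k) mpoly) l \<in> ?J"
            unfolding Jdef by (rule ideal_in_gen) (rule SR_1[OF SR])
          then show ?thesis by (simp only: jet_coeff_edge[OF y(4) l] mult_1_left)
        qed
        have key: "Var (x, j) * Var (y, 0) ^ Suc j \<in> ?J"
          unfolding Jdef
        proof (rule jet_key[where X = "\<lambda>a. Var (x, a)" and Y = "\<lambda>a. Var (y, a)", OF SR _ _ _ xj(3)])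
          show "Var (x, a) \<in> ?P" if "a \<le> s" for a using VarP[OF xV that] .
          show "Var (y, a) \<in> ?P" if "a \<le> s" for a using VarP[OF y(1) that] .
          show "(\<Sum>a\<le>l. Var (x, a) * Var (y, l - a)) \<in> ideal_in ?P ?B" if "l \<le> s" for l
            using alpha[OF that] unfolding Jdef .
        qed
        define R where "R = (\<Prod>z\<in>V - W - {y}. Var (z, 0) :: ('v \<times> nat, 'k) mpoly)"
        have RP: "R \<in> ?P" unfolding R_def by (rule SR_prod[OF SR]) (use VarP in auto)
        have "?f = Var (y, 0) * R" unfolding R_def
          by (rule prod.remove) (use finV y in auto)
        moreover have "Var (y, 0) ^ Suc s = Var (y, 0) ^ Suc j * (Var (y, 0) ^ (s - j) :: ('v \<times> nat, 'k) mpoly)"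
        proof -
          have "Suc s = Suc j + (s - j)" using xj(3) by simp
          then show ?thesis by (metis power_add)
        qed
        ultimately have "?f ^ Suc s = Var (y, 0) ^ Suc j * (Var (y, 0) ^ (s - j) * R ^ Suc s)"
          by (simp only: power_mult_distrib mult.assoc)
        then have eq: "c * b * ?f ^ Suc s = (c * Var (y, 0) ^ (s - j) * R ^ Suc s) * (Var (x, j) * Var (y, 0) ^ Suc j)"
          using xj(1) by (simp add: mult_ac)
        have "c * Var (y, 0) ^ (s - j) * R ^ Suc s \<in> ?P"
          using c VarP[OF y(1), of 0] RP by (intro SR_mult[OF SR] SR_power[OF SR]) simp_all
        then show "c * b \<in> {h. h * ?f ^ Suc s \<in> ?J}"
          unfolding mem_Collect_eq eq Jdef by (rule ideal_in_mult[OF SR key[unfolded Jdef]])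
      qed
      then have "g * ?f ^ Suc s \<in> ?J" using g by blast
      then show "g \<in> saturation ?P ?J ?f" unfolding saturation_def using gP by blast
    qed
  next
    show "saturation ?P ?J ?f \<subseteq> ideal_in ?P (jet_vars W s)"
    proof
      fix g assume "g \<in> saturation ?P ?J ?f"
      then obtain N where gP: "g \<in> ?P" and gN: "g * ?f ^ N \<in> ?J" unfolding saturation_def by blast
      have Jmi: "?J \<subseteq> mi (W \<times> UNIV)"
        unfolding Jdef
      proof (rule ideal_in_minimal)
        show "0 \<in> mi (W \<times> UNIV)" by (rule mi_0)
      next
        fix a b :: "('v \<times> nat, 'k) mpoly" assume "a \<in> mi (W \<times> UNIV)" "b \<in> mi (W \<times> UNIV)"
        then show "a + b \<in> mi (W \<times> UNIV)" by (rule mi_add)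
      next
        fix b c :: "('v \<times> nat, 'k) mpoly" assume b: "b \<in> ?B"
        then obtain e l where el: "b = jet_coeff s e l" "e \<in> edge_gens E" "l \<le> s" by blast
        have "\<exists>i j. e = Var i * Var j \<and> {i, j} \<in> E \<and> i \<noteq> j" using el(2) unfolding edge_gens_def by simp
        then obtain i j where ij: "e = Var i * Var j" "{i, j} \<in> E" "i \<noteq> j" by blast
        have cov: "\<forall>e\<in>E. e \<inter> W \<noteq> {}" using vc unfolding vertex_cover_def by simp
        have "{i, j} \<inter> W \<noteq> {}" using bspec[OF cov ij(2)] .
        then have ijW: "i \<in> W \<or> j \<in> W" by auto
        have "b = (\<Sum>a\<le>l. Var (i, a) * Var (j, l - a))"
          unfolding el(1) ij(1) by (rule jet_coeff_edge[OF ij(3) el(3)])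
        also have "\<dots> \<in> mi (W \<times> UNIV)"
        proof (rule mi_sum)
          fix a assume "a \<in> {..l}"
          show "(Var (i, a) * Var (j, l - a) :: ('v \<times> nat, 'k) mpoly) \<in> mi (W \<times> UNIV)"
            unfolding Var_mult_Var
          proof (rule single_in_mi)
            have "Poly_Mapping.keys (Poly_Mapping.single (i, a) 1 + Poly_Mapping.single (j, l - a) (1::nat))
                = {(i, a), (j, l - a)}" by (auto simp: keys_add_nat)
            then show "Poly_Mapping.keys (Poly_Mapping.single (i, a) 1 + Poly_Mapping.single (j, l - a) (1::nat)) \<inter> W \<times> UNIV \<noteq> {}"
              using ijW by auto
          qed
        qed
        finally show "c * b \<in> mi (W \<times> UNIV)" by (rule mi_mult)
      qed
      have fs: "?f = Poly_Mapping.single (\<Sum>y\<in>V - W. Poly_Mapping.single (y, 0) 1) 1"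
        by (rule prod_Var_single) (use finV in auto)
      have k0: "Poly_Mapping.keys (\<Sum>y\<in>V - W. Poly_Mapping.single (y, 0) (1::nat)) \<inter> W \<times> UNIV = {}"
        using keys_sum_nat[of "\<lambda>y. Poly_Mapping.single (y, 0) (1::nat)" "V - W"] by auto
      obtain m0 where m0: "?f ^ N = Poly_Mapping.single m0 1"
        "Poly_Mapping.keys m0 \<subseteq> Poly_Mapping.keys (\<Sum>y\<in>V - W. Poly_Mapping.single (y, 0) (1::nat))"
        unfolding fs using single_power[of "\<Sum>y\<in>V - W. Poly_Mapping.single (y, 0) (1::nat)" N] by blast
      have gmi: "g \<in> mi (W \<times> UNIV)" unfolding mi_def
      proof (intro CollectI ballI)
        fix k assume k: "k \<in> Poly_Mapping.keys g"
        have "Poly_Mapping.lookup (g * ?f ^ N) (k + m0) = Poly_Mapping.lookup g k"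
          unfolding m0(1) by (rule lookup_mult_single1)
        then have "k + m0 \<in> Poly_Mapping.keys (g * ?f ^ N)" using k by (simp add: in_keys_iff)
        moreover have gNm: "g * ?f ^ N \<in> mi (W \<times> UNIV)" using subsetD[OF Jmi gN] .
        ultimately have "Poly_Mapping.keys (k + m0) \<inter> W \<times> UNIV \<noteq> {}"
          using bspec[OF gNm[unfolded mi_def mem_Collect_eq]] by simp
        moreover have "Poly_Mapping.keys m0 \<inter> W \<times> UNIV = {}" using m0(2) k0 by blast
        ultimately show "Poly_Mapping.keys k \<inter> W \<times> UNIV \<noteq> {}"
          by (simp add: keys_add_nat Int_Un_distrib2)
      qed
      show "g \<in> ideal_in ?P (jet_vars W s)" by (rule decomp_in_ideal[OF gP gmi WV])
    qed
  qed
qed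

end
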